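(* If a compact Hausdorff space $K$ has the extension property and satisfies the countable chain condition, then $K$ has countable spread, i.e., every discrete subset of $K$ is countable.
   Context: A topological space satisfies the countable chain condition if every family of pairwise disjoint nonempty open subsets is countable. $C(K)$ is the Banach space of real-valued continuous functions on $K$ with the supremum norm. For a closed $F\subseteq K$, an extension operator for $F$ in $K$ is a bounded linear map $E:C(F)\to C(K)$ with $E(f)|_F=f$ for all $f\in C(F)$. $K$ has the extension property if every nonempty closed subset of $K$ admits an extension operator in $K$. *)

theory Defs
  imports "HOL-Analysis.Analysis"
begin

definition ccc_space :: "'a topology \<Rightarrow> bool" where
  "ccc_space X \<longleftrightarrow>
     (\<forall>\<U>. (\<forall>U\<in>\<U>. openin X U \<and> U \<noteq> {}) \<and> pairwise disjnt \<U> \<longrightarrow> countable \<U>)"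

definition countable_spread :: "'a topology \<Rightarrow> bool" where
  "countable_spread X \<longleftrightarrow>
     (\<forall>D. D \<subseteq> topspace X \<and> subtopology X D = discrete_topology D \<longrightarrow> countable D)"

text \<open>Elements of C(F) are represented by real functions continuous on F (values off F
  are irrelevant).\<close>
definition extension_operator ::
  "'a topology \<Rightarrow> 'a set \<Rightarrow> (('a \<Rightarrow> real) \<Rightarrow> ('a \<Rightarrow> real)) \<Rightarrow> bool" where
  "extension_operator X F E \<longleftrightarrow>
     (\<forall>f. continuous_map (subtopology X F) euclideanreal f \<longrightarrow>
          continuous_map X euclideanreal (E f) \<and> (\<forall>x\<in>F. E f x = f x)) \<and>
     (\<forall>f g. continuous_map (subtopology X F) euclideanreal f \<longrightarrow>
            continuous_map (subtopology X F) euclideanreal g \<longrightarrow>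
            (\<forall>x\<in>topspace X. E (\<lambda>y. f y + g y) x = E f x + E g x)) \<and>
     (\<forall>f c. continuous_map (subtopology X F) euclideanreal f \<longrightarrow>
            (\<forall>x\<in>topspace X. E (\<lambda>y. c * f y) x = c * E f x)) \<and>
     (\<exists>M. \<forall>f. continuous_map (subtopology X F) euclideanreal f \<longrightarrow>
            (\<forall>x\<in>topspace X. \<bar>E f x\<bar> \<le> M * (SUP y\<in>F. \<bar>f y\<bar>)))"

definition extension_property :: "'a topology \<Rightarrow> bool" where
  "extension_property X \<longleftrightarrow>
     (\<forall>F. closedin X F \<and> F \<noteq> {} \<longrightarrow> (\<exists>E. extension_operator X F E))"

end

theory Submission
  imports Defs
begin

lemma cont_indicator:
  assumes "openin X {d}" "closedin X {d}"
  shows "continuous_map X euclideanreal (\<lambda>y. if y = d then 1 else 0)"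
proof -
  have dX: "d \<in> topspace X" using assms(1) openin_subset by blast
  have op2: "openin X (topspace X - {d})" using assms(2) by blast
  show ?thesis unfolding continuous_map_def
  proof (intro conjI allI impI)
    fix U :: "real set" assume "openin euclideanreal U"
    have "{x \<in> topspace X. (if x = d then 1 else 0) \<in> U} =
          (if (1::real) \<in> U then {d} else {}) \<union> (if (0::real) \<in> U then topspace X - {d} else {})"
      using dX by auto
    then show "openin X {x \<in> topspace X. (if x = d then 1 else 0) \<in> U}"
      using assms(1) op2 by (auto simp: insert_absorb[OF dX])
  qed auto
qed

lemma ccc_bounded_order:
  assumes ccc: "ccc_space X"
  shows "(\<forall>i\<in>I. openin X (V i) \<and> V i \<noteq> {}) \<Longrightarrow>
         (\<forall>x. finite {i\<in>I. x \<in> V i} \<and> card {i\<in>I. x \<in> V i} \<le> N) \<Longrightarrow> countable I"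
proof (induction N arbitrary: I V)
  case 0
  have "I = {}"
  proof (rule ccontr)
    assume "I \<noteq> {}"
    then obtain i where i: "i \<in> I" by blast
    then obtain x where "x \<in> V i" using "0.prems"(1) by blast
    then have "i \<in> {i\<in>I. x \<in> V i}" using i by blast
    then show False using "0.prems"(2)[rule_format, of x] by (metis card_0_eq empty_iff le_zero_eq)
  qed
  then show ?case by simp
next
  case (Suc N)
  define A where "A = {J. J \<subseteq> I \<and> (\<forall>i\<in>J. \<forall>j\<in>J. i \<noteq> j \<longrightarrow> disjnt (V i) (V j))}"
  have "\<exists>M\<in>A. \<forall>X\<in>A. M \<subseteq> X \<longrightarrow> X = M"
  proof (rule Zorn_Lemma, intro ballI)
    fix C assume C: "C \<in> chains A"
    show "\<Union>C \<in> A" unfolding A_def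
    proof (intro CollectI conjI ballI impI)
      show "\<Union>C \<subseteq> I" using C unfolding chains_def A_def by blast
      fix i j assume "i \<in> \<Union>C" "j \<in> \<Union>C" "i \<noteq> j"
      then obtain Ci Cj where "Ci \<in> C" "Cj \<in> C" "i \<in> Ci" "j \<in> Cj" by blast
      moreover have "Ci \<subseteq> Cj \<or> Cj \<subseteq> Ci" using C \<open>Ci \<in> C\<close> \<open>Cj \<in> C\<close>
        unfolding chains_def chain_subset_def by blast
      ultimately show "disjnt (V i) (V j)" using C \<open>i \<noteq> j\<close> unfolding chains_def A_def by blast
    qed
  qed
  then obtain J where JA: "J \<in> A" and Jmax: "\<And>X. X \<in> A \<Longrightarrow> J \<subseteq> X \<Longrightarrow> X = J" by blast
  have JI: "J \<subseteq> I" and Jd: "\<And>i j. i \<in> J \<Longrightarrow> j \<in> J \<Longrightarrow> i \<noteq> j \<Longrightarrow> disjnt (V i) (V j)"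
    using JA unfolding A_def by auto
  have injJ: "inj_on V J"
  proof (rule inj_onI, rule ccontr)
    fix i j assume "i \<in> J" "j \<in> J" "V i = V j" "i \<noteq> j"
    then show False using Jd[of i j] Suc.prems(1) JI by (auto simp: disjnt_def)
  qed
  have "countable (V ` J)"
    using ccc unfolding ccc_space_def
  proof (elim allE impE)
    show "(\<forall>U\<in>V ` J. openin X U \<and> U \<noteq> {}) \<and> pairwise disjnt (V ` J)"
      using Suc.prems(1) JI Jd unfolding pairwise_def by (metis (no_types, lifting) image_iff subsetD)
  qed
  then have cJ: "countable J" using injJ by (simp add: countable_image_inj_eq)
  define Ij where "Ij j = {i \<in> I - {j}. V i \<inter> V j \<noteq> {}}" for j
  have cIj: "countable (Ij j)" if j: "j \<in> J" for j
  proof (rule Suc.IH[of "Ij j" "\<lambda>i. V i \<inter> V j"])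
    show "\<forall>i\<in>Ij j. openin X (V i \<inter> V j) \<and> V i \<inter> V j \<noteq> {}"
      using Suc.prems(1) JI j unfolding Ij_def by auto
    show "\<forall>x. finite {i \<in> Ij j. x \<in> V i \<inter> V j} \<and> card {i \<in> Ij j. x \<in> V i \<inter> V j} \<le> N"
    proof
      fix x
      show "finite {i \<in> Ij j. x \<in> V i \<inter> V j} \<and> card {i \<in> Ij j. x \<in> V i \<inter> V j} \<le> N"
      proof (cases "x \<in> V j")
        case False
        then have e: "{i \<in> Ij j. x \<in> V i \<inter> V j} = {}" by auto
        show ?thesis by (simp only: e) simp
      next
        case True
        have fin: "finite {i\<in>I. x \<in> V i}" and cd: "card {i\<in>I. x \<in> V i} \<le> Suc N"
          using Suc.prems(2) by auto
        have sub: "{i \<in> Ij j. x \<in> V i \<inter> V j} \<subseteq> {i\<in>I. x \<in> V i} - {j}"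
          unfolding Ij_def by auto
        have jin: "j \<in> {i\<in>I. x \<in> V i}" using True j JI by auto
        have "card ({i\<in>I. x \<in> V i} - {j}) \<le> N"
          using cd jin fin by (simp add: card_Diff_singleton)
        then show ?thesis using sub fin
          by (meson card_mono finite_Diff finite_subset order_trans)
      qed
    qed
  qed
  have "I \<subseteq> J \<union> (\<Union>j\<in>J. Ij j)"
  proof
    fix i assume iI: "i \<in> I"
    show "i \<in> J \<union> (\<Union>j\<in>J. Ij j)"
    proof (cases "i \<in> J")
      case False
      have "insert i J \<noteq> J" using False by blast
      then have "insert i J \<notin> A" using Jmax by blast
      then obtain j where "j \<in> J" "\<not> disjnt (V i) (V j)"
        using iI JI Jd unfolding A_def by (auto simp: disjnt_sym) (metis disjnt_sym)
      then have "i \<in> Ij j" using iI False unfolding Ij_def disjnt_def by auto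
      then show ?thesis using \<open>j \<in> J\<close> by blast
    qed simp
  qed
  moreover have "countable (J \<union> (\<Union>j\<in>J. Ij j))" using cJ cIj by auto
  ultimately show ?case using countable_subset by blast
qed

lemma ext_sum:
  assumes E: "extension_operator X F E" and S: "finite S"
    and f: "\<forall>d\<in>S. continuous_map (subtopology X F) euclideanreal (f d)"
    and x: "x \<in> topspace X"
  shows "E (\<lambda>y. \<Sum>d\<in>S. c d * f d y) x = (\<Sum>d\<in>S. c d * E (f d) x)"
  using S f
proof -
  have add: "\<And>f g. continuous_map (subtopology X F) euclideanreal f \<Longrightarrow>
            continuous_map (subtopology X F) euclideanreal g \<Longrightarrow>
            E (\<lambda>y. f y + g y) x = E f x + E g x"
    using E x unfolding extension_operator_def by blast
  have hom: "\<And>f c. continuous_map (subtopology X F) euclideanreal f \<Longrightarrow>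
            E (\<lambda>y. c * f y) x = c * E f x"
    using E x unfolding extension_operator_def by blast
  show ?thesis using S f
proof (induction S rule: finite_induct)
  case empty
  have c0: "continuous_map (subtopology X F) euclideanreal (\<lambda>y. 0::real)" by simp
  have "E (\<lambda>y. 0 * 0) x = 0 * E (\<lambda>y. 0) x"
    using hom[OF c0] .
  then show ?case by simp
next
  case (insert a S)
  have ca: "continuous_map (subtopology X F) euclideanreal (\<lambda>y. c a * f a y)"
    using insert.prems by (intro continuous_intros) auto
  have cS: "continuous_map (subtopology X F) euclideanreal (\<lambda>y. \<Sum>d\<in>S. c d * f d y)"
    using insert.prems insert.hyps by (intro continuous_intros) auto
  have "E (\<lambda>y. \<Sum>d\<in>insert a S. c d * f d y) x = E (\<lambda>y. c a * f a y + (\<Sum>d\<in>S. c d * f d y)) x"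
    using insert.hyps by simp
  also have "\<dots> = E (\<lambda>y. c a * f a y) x + E (\<lambda>y. \<Sum>d\<in>S. c d * f d y) x"
    by (rule add[OF ca cS])
  also have "E (\<lambda>y. c a * f a y) x = c a * E (f a) x"
    using hom[of "f a" "c a"] insert.prems by simp
  also have "E (\<lambda>y. \<Sum>d\<in>S. c d * f d y) x = (\<Sum>d\<in>S. c d * E (f d) x)"
    using insert.IH insert.prems by simp
  finally show ?case by (simp only: sum.insert[OF insert.hyps])
qed
qed

lemma ext_op_D:
  assumes "extension_operator X F E" "continuous_map (subtopology X F) euclideanreal f"
  shows "continuous_map X euclideanreal (E f)" "x \<in> F \<Longrightarrow> E f x = f x"
proof -
  have "\<forall>f. continuous_map (subtopology X F) euclideanreal f \<longrightarrow>
          continuous_map X euclideanreal (E f) \<and> (\<forall>x\<in>F. E f x = f x)"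
    using assms(1) unfolding extension_operator_def by (rule conjunct1)
  then have "continuous_map X euclideanreal (E f) \<and> (\<forall>x\<in>F. E f x = f x)"
    using assms(2) by blast
  then show "continuous_map X euclideanreal (E f)" "x \<in> F \<Longrightarrow> E f x = f x" by auto
qed

lemma ext_op_bound:
  assumes "extension_operator X F E"
  obtains M where "\<And>f x. continuous_map (subtopology X F) euclideanreal f \<Longrightarrow>
          x \<in> topspace X \<Longrightarrow> \<bar>E f x\<bar> \<le> M * (SUP y\<in>F. \<bar>f y\<bar>)"
proof -
  have "\<exists>M. \<forall>f. continuous_map (subtopology X F) euclideanreal f \<longrightarrow>
            (\<forall>x\<in>topspace X. \<bar>E f x\<bar> \<le> M * (SUP y\<in>F. \<bar>f y\<bar>))"
    using conjunct2[OF conjunct2[OF conjunct2[OF assms[unfolded extension_operator_def]]]] .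
  then show ?thesis using that by blast
qed

theorem corollary3p16:
  fixes K :: "'a topology"
  assumes "compact_space K" and "Hausdorff_space K"
    and "extension_property K" and "ccc_space K"
  shows "countable_spread K"
  unfolding countable_spread_def
proof (intro allI impI)
  fix D assume D: "D \<subseteq> topspace K \<and> subtopology K D = discrete_topology D"
  have t1: "t1_space K" using assms(2) by (simp add: Hausdorff_imp_t1_space)
  show "countable D"
  proof (cases "D = {}")
    case True then show ?thesis by simp
  next
    case False
    define F where "F = K closure_of D"
    have Fc: "closedin K F" unfolding F_def by simp
    have DF: "D \<subseteq> F" unfolding F_def using D closure_of_subset by blast
    have Fne: "F \<noteq> {}" using DF False by blast
    obtain E where E: "extension_operator K F E" using assms(3) Fc Fne
      unfolding extension_property_def by blast
    obtain M where M: "\<And>f x. continuous_map (subtopology K F) euclideanreal f \<Longrightarrow>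
          x \<in> topspace K \<Longrightarrow> \<bar>E f x\<bar> \<le> M * (SUP y\<in>F. \<bar>f y\<bar>)"
      using ext_op_bound[OF E] by blast
    define f where "f d = (\<lambda>y::'a. if y = d then 1 else (0::real))" for d :: 'a
    have iso: "openin (subtopology K F) {d}" if d: "d \<in> D" for d
    proof -
      have "openin (subtopology K D) {d}" using D d by simp
      then obtain U where U: "openin K U" "{d} = U \<inter> D" by (auto simp: openin_subtopology)
      have "U \<inter> F \<subseteq> K closure_of (U \<inter> D)"
        unfolding F_def using U(1) openin_Int_closure_of_subset by blast
      also have "\<dots> = {d}" proof -
        have "d \<in> topspace K" using d D by blast
        then show ?thesis using closure_of_singleton[OF t1, of d] U(2) by simp
      qed
      finally have "U \<inter> F = {d}" using U(2) DF by blast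
      moreover have "openin (subtopology K F) (U \<inter> F)" using U(1) by (rule openin_subtopology_Int)
      ultimately show ?thesis by simp
    qed
    have cf: "continuous_map (subtopology K F) euclideanreal (f d)" if d: "d \<in> D" for d
      unfolding f_def
    proof (rule cont_indicator)
      show "openin (subtopology K F) {d}" using iso d .
      show "closedin (subtopology K F) {d}"
      proof -
        have "d \<in> topspace K" using d D by blast
        then have "closedin K {d}" using t1 by (simp add: closedin_t1_singleton)
        then have "closedin (subtopology K F) (F \<inter> {d})" by (rule closedin_subtopology_Int_closed)
        moreover have "F \<inter> {d} = {d}" using d DF by blast
        ultimately show ?thesis by simp
      qed
    qed
    define g where "g d = E (f d)" for d
    have gcont: "continuous_map K euclideanreal (g d)" if "d \<in> D" for d
      unfolding g_def by (rule ext_op_D(1)[OF E cf[OF that]])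
    have gd: "g d d' = (if d' = d then 1 else 0)" if "d \<in> D" "d' \<in> D" for d d'
      using ext_op_D(2)[OF E cf[OF that(1)], of d'] that DF unfolding g_def f_def by auto
    have bound: "(\<Sum>d\<in>S. \<bar>g d x\<bar>) \<le> \<bar>M\<bar>" if S: "finite S" "S \<subseteq> D" and x: "x \<in> topspace K" for S x
    proof -
      define c where "c d = sgn (g d x)" for d
      define h where "h = (\<lambda>y. \<Sum>d\<in>S. c d * f d y)"
      have hsum: "E h x = (\<Sum>d\<in>S. c d * g d x)"
        unfolding h_def g_def using ext_sum[OF E S(1) _ x, of f c] cf S(2) by blast
      have sabs: "(\<Sum>d\<in>S. c d * g d x) = (\<Sum>d\<in>S. \<bar>g d x\<bar>)"
        unfolding c_def by (intro sum.cong refl) (auto simp: sgn_real_def)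
      have hc: "continuous_map (subtopology K F) euclideanreal h"
        unfolding h_def using cf S by (intro continuous_intros) auto
      have hy: "\<bar>h y\<bar> \<le> 1" for y
      proof -
        have "h y = (\<Sum>d\<in>S. if y = d then c d else 0)"
          unfolding h_def f_def by (intro sum.cong) auto
        also have "\<dots> = (if y \<in> S then c y else 0)" using S(1) by (simp add: sum.delta)
        finally show ?thesis unfolding c_def by (auto simp: abs_sgn_eq)
      qed
      have sup: "(SUP y\<in>F. \<bar>h y\<bar>) \<le> 1" using Fne hy by (intro cSUP_least) auto
      have sup0: "0 \<le> (SUP y\<in>F. \<bar>h y\<bar>)"
      proof -
        obtain y where "y \<in> F" using Fne by blast
        have "bdd_above ((\<lambda>y. \<bar>h y\<bar>) ` F)" using hy by (intro bdd_aboveI) auto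
        then have "\<bar>h y\<bar> \<le> (SUP y\<in>F. \<bar>h y\<bar>)" using \<open>y \<in> F\<close> by (intro cSUP_upper) auto
        then show ?thesis by linarith
      qed
      have "\<bar>E h x\<bar> \<le> M * (SUP y\<in>F. \<bar>h y\<bar>)" using M hc x by blast
      also have "\<dots> \<le> \<bar>M\<bar> * (SUP y\<in>F. \<bar>h y\<bar>)" using sup0 by (simp add: mult_right_mono)
      also have "\<dots> \<le> \<bar>M\<bar>" using sup sup0 by (simp add: mult_left_le)
      finally have "\<bar>E h x\<bar> \<le> \<bar>M\<bar>" .
      then show ?thesis using hsum sabs by linarith
    qed
    define V where "V d = {x \<in> topspace K. g d x \<in> {1/2<..}}" for d
    define N where "N = nat \<lceil>2 * \<bar>M\<bar>\<rceil>"
    have cardS: "card S \<le> N" if S: "finite S" "S \<subseteq> {d\<in>D. x \<in> V d}" for S x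
    proof (cases "S = {}")
      case True then show ?thesis by simp
    next
      case False
      then obtain d0 where "d0 \<in> S" by blast
      then have x: "x \<in> topspace K" using S unfolding V_def by auto
      have "(\<Sum>d\<in>S. (1/2::real)) \<le> (\<Sum>d\<in>S. \<bar>g d x\<bar>)"
        using S unfolding V_def by (intro sum_mono) auto
      also have "\<dots> \<le> \<bar>M\<bar>" using bound[OF S(1) _ x] S(2) by blast
      finally have "real (card S) \<le> 2 * \<bar>M\<bar>" by simp
      then show ?thesis unfolding N_def by linarith
    qed
    have fin: "finite {d\<in>D. x \<in> V d} \<and> card {d\<in>D. x \<in> V d} \<le> N" for x
    proof -
      have "finite {d\<in>D. x \<in> V d}"
      proof (rule ccontr)
        assume "infinite {d\<in>D. x \<in> V d}"
        then obtain S where "finite S" "card S = Suc N" "S \<subseteq> {d\<in>D. x \<in> V d}"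
          using infinite_arbitrarily_large by blast
        then show False using cardS by fastforce
      qed
      then show ?thesis using cardS by blast
    qed
    show "countable D"
    proof (rule ccc_bounded_order[OF assms(4)])
      show "\<forall>d\<in>D. openin K (V d) \<and> V d \<noteq> {}"
      proof
        fix d assume d: "d \<in> D"
        have "openin K (V d)" unfolding V_def
          using gcont[OF d] by (intro openin_continuous_map_preimage) auto
        moreover have "d \<in> V d" using d D gd[OF d d] unfolding V_def by auto
        ultimately show "openin K (V d) \<and> V d \<noteq> {}" by blast
      qed
      show "\<forall>x. finite {d\<in>D. x \<in> V d} \<and> card {d\<in>D. x \<in> V d} \<le> N" using fin by blast
    qed
  qed
qed

end
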